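(* Let $m\ge 1$ and $n\geq 2m$ be integers, and let $p,q$ be real numbers with $0<p\leq q$ and $0<p+q<1$. Then the minimum discrepancy of $C_{n,m}$ satisfies $$\delta(C_{n,m})\geq\min\{m^2,\ (1+\gamma)m\},$$ where $\gamma=\gamma_{p,q}=\log_{\frac{q}{1-p}}\left(\frac{p}{1-q}\right)$.
   Context: For integers $n\geq 2$, $N=\binom{n}{2}$ and $1\leq m\leq n$, the community code $C_{n,m}\subseteq\mathbb{F}_2^N$ consists of exactly those binary vectors of length $N$ that are the upper-triangular (off-diagonal) part of the adjacency matrix of a simple undirected graph on the labeled vertex set $\{1,\ldots,n\}$ which is a disjoint union of cliques, each clique having at least $m$ vertices. For $\mathbf{x},\mathbf{y}\in\mathbb{F}_2^N$ and $a,b\in\mathbb{F}_2$ let $d_{ab}(\mathbf{y},\mathbf{x})=|\{i: y_i=a,\ x_i=b\}|$. The discrepancy (associated with a binary asymmetric channel with crossover probabilities $p$ for $0\to1$ and $q$ for $1\to0$) is $\delta(\mathbf{y},\mathbf{x})=\gamma\, d_{10}(\mathbf{y},\mathbf{x})+d_{01}(\mathbf{y},\mathbf{x})$ with $\gamma=\log_{\frac{q}{1-p}}\left(\frac{p}{1-q}\right)$ (one has $\gamma\ge 1$). The minimum discrepancy $\delta(C)$ of a code $C$ is the minimum of $\delta(\mathbf{y},\mathbf{x})$ over all ordered pairs of distinct codewords $\mathbf{x},\mathbf{y}\in C$. *)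

theory Defs
  imports Complex_Main
begin

text \<open>Coordinates of F_2^N, N = n choose 2: unordered pairs {i,j} of vertices in {1..n},
  represented as (i,j) with 1 <= i < j <= n (upper-triangular off-diagonal entries).
  A binary vector of length N is a function on these pairs, taken False outside.\<close>

definition pairs :: "nat \<Rightarrow> (nat \<times> nat) set" where
  "pairs n = {(i,j). 1 \<le> i \<and> i < j \<and> j \<le> n}"

definition clique_partition :: "nat set \<Rightarrow> nat \<Rightarrow> nat set set \<Rightarrow> bool" where
  "clique_partition V m P \<longleftrightarrow>
     \<Union>P = V \<and> {} \<notin> P \<and>
     (\<forall>A\<in>P. \<forall>B\<in>P. A \<noteq> B \<longrightarrow> A \<inter> B = {}) \<and>
     (\<forall>B\<in>P. card B \<ge> m)"

definition cluster_graph :: "nat \<Rightarrow> nat \<Rightarrow> (nat \<Rightarrow> nat \<Rightarrow> bool) \<Rightarrow> bool" where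
  "cluster_graph n m E \<longleftrightarrow>
     (\<exists>P. clique_partition {1..n} m P \<and>
          (\<forall>i\<in>{1..n}. \<forall>j\<in>{1..n}. E i j \<longleftrightarrow> i \<noteq> j \<and> (\<exists>B\<in>P. i \<in> B \<and> j \<in> B)))"

definition adj_vec :: "nat \<Rightarrow> (nat \<Rightarrow> nat \<Rightarrow> bool) \<Rightarrow> (nat \<times> nat \<Rightarrow> bool)" where
  "adj_vec n E = (\<lambda>(i,j). (i,j) \<in> pairs n \<and> E i j)"

definition community_code :: "nat \<Rightarrow> nat \<Rightarrow> (nat \<times> nat \<Rightarrow> bool) set" where
  "community_code n m = {adj_vec n E | E. cluster_graph n m E}"

definition dd :: "nat \<Rightarrow> bool \<Rightarrow> bool \<Rightarrow> (nat \<times> nat \<Rightarrow> bool) \<Rightarrow> (nat \<times> nat \<Rightarrow> bool) \<Rightarrow> nat" where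
  "dd n a b y x = card {k \<in> pairs n. y k = a \<and> x k = b}"

definition gamma_pq :: "real \<Rightarrow> real \<Rightarrow> real" where
  "gamma_pq p q = log (q / (1 - p)) (p / (1 - q))"

definition discrepancy :: "nat \<Rightarrow> real \<Rightarrow> real \<Rightarrow> (nat \<times> nat \<Rightarrow> bool) \<Rightarrow> (nat \<times> nat \<Rightarrow> bool) \<Rightarrow> real" where
  "discrepancy n p q y x = gamma_pq p q * real (dd n True False y x) + real (dd n False True y x)"

definition min_discrepancy :: "nat \<Rightarrow> real \<Rightarrow> real \<Rightarrow> (nat \<times> nat \<Rightarrow> bool) set \<Rightarrow> real" where
  "min_discrepancy n p q C = Inf {discrepancy n p q y x | x y. x \<in> C \<and> y \<in> C \<and> x \<noteq> y}"

end

theory Submission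
  imports Defs
begin

definition pr :: "nat \<Rightarrow> nat \<Rightarrow> nat \<times> nat" where "pr u v = (min u v, max u v)"
definition sm :: "(nat \<times> nat \<Rightarrow> bool) \<Rightarrow> nat \<Rightarrow> nat \<Rightarrow> bool" where
  "sm x u v \<longleftrightarrow> u = v \<or> x (pr u v)"
definition cl :: "nat \<Rightarrow> (nat \<times> nat \<Rightarrow> bool) \<Rightarrow> nat \<Rightarrow> nat set" where
  "cl n x u = {v\<in>{1..n}. sm x u v}"
definition good :: "nat \<Rightarrow> nat \<Rightarrow> (nat \<times> nat \<Rightarrow> bool) \<Rightarrow> bool" where
  "good n m x \<longleftrightarrow> (\<forall>k. x k \<longrightarrow> k \<in> pairs n) \<and>
     (\<forall>u\<in>{1..n}. \<forall>v\<in>{1..n}. \<forall>w\<in>{1..n}. sm x u v \<longrightarrow> sm x v w \<longrightarrow> sm x u w) \<and>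
     (\<forall>u\<in>{1..n}. m \<le> card (cl n x u))"
definition Tset :: "nat \<Rightarrow> (nat \<times> nat \<Rightarrow> bool) \<Rightarrow> (nat \<times> nat \<Rightarrow> bool) \<Rightarrow> (nat \<times> nat) set" where
  "Tset n y x = {k \<in> pairs n. y k \<and> \<not> x k}"

lemma pr_sym: "pr u v = pr v u" by (auto simp: pr_def min_def max_def)
lemma sm_sym: "sm x u v = sm x v u" by (auto simp: sm_def pr_sym)
lemma sm_refl: "sm x u u" by (simp add: sm_def)
lemma pr_pairs: "u \<in> {1..n} \<Longrightarrow> v \<in> {1..n} \<Longrightarrow> u \<noteq> v \<Longrightarrow> pr u v \<in> pairs n"
  by (auto simp: pr_def pairs_def min_def max_def)
lemma pr_eq: "pr a b = pr c d \<Longrightarrow> (a = c \<and> b = d) \<or> (a = d \<and> b = c)"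
  by (auto simp: pr_def min_def max_def split: if_splits)
lemma pr_in_T: "u \<in> {1..n} \<Longrightarrow> v \<in> {1..n} \<Longrightarrow> u \<noteq> v \<Longrightarrow> sm y u v \<Longrightarrow> \<not> sm x u v
   \<Longrightarrow> pr u v \<in> Tset n y x"
  by (auto simp: Tset_def sm_def pr_pairs)
lemma T_elem: "k \<in> Tset n y x \<Longrightarrow> \<exists>u v. k = pr u v \<and> u \<in> {1..n} \<and> v \<in> {1..n} \<and> u \<noteq> v
   \<and> sm y u v \<and> \<not> sm x u v"
proof -
  assume k: "k \<in> Tset n y x"
  obtain i j where kij: "k = (i,j)" by fastforce
  have "i < j" "1 \<le> i" "j \<le> n" using k kij by (auto simp: Tset_def pairs_def)
  then have "pr i j = k" using kij by (auto simp: pr_def)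
  then show ?thesis using k \<open>i<j\<close> \<open>1 \<le> i\<close> \<open>j \<le> n\<close>
    by (intro exI[of _ i] exI[of _ j]) (auto simp: Tset_def sm_def)
qed
lemma finite_T: "finite (Tset n y x)"
proof -
  have "Tset n y x \<subseteq> {0..n} \<times> {0..n}" by (auto simp: Tset_def pairs_def)
  then show ?thesis by (rule finite_subset) auto
qed
lemma cl_sub: "cl n x u \<subseteq> {1..n}" by (auto simp: cl_def)
lemma finite_cl: "finite (cl n x u)" by (rule finite_subset[OF cl_sub]) auto
lemma cl_self: "u \<in> {1..n} \<Longrightarrow> u \<in> cl n x u" by (simp add: cl_def sm_refl)

lemma good_trans: "good n m x \<Longrightarrow> u \<in> {1..n} \<Longrightarrow> v \<in> {1..n} \<Longrightarrow> w \<in> {1..n} \<Longrightarrow>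
   sm x u v \<Longrightarrow> sm x v w \<Longrightarrow> sm x u w"
  unfolding good_def by blast
lemma good_card: "good n m x \<Longrightarrow> u \<in> {1..n} \<Longrightarrow> m \<le> card (cl n x u)"
  unfolding good_def by blast
lemma good_out: "good n m x \<Longrightarrow> x k \<Longrightarrow> k \<in> pairs n"
  unfolding good_def by blast

lemma code_good:
  assumes "x \<in> community_code n m" shows "good n m x"
proof -
  obtain E where xE: "x = adj_vec n E" and cg: "cluster_graph n m E"
    using assms by (auto simp: community_code_def)
  obtain P where cp: "clique_partition {1..n} m P" and
    E: "\<forall>i\<in>{1..n}. \<forall>j\<in>{1..n}. E i j \<longleftrightarrow> i \<noteq> j \<and> (\<exists>B\<in>P. i \<in> B \<and> j \<in> B)"
    using cg by (auto simp: cluster_graph_def)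
  have UP: "\<Union>P = {1..n}" and disj: "\<And>A B. A\<in>P \<Longrightarrow> B\<in>P \<Longrightarrow> A \<noteq> B \<Longrightarrow> A \<inter> B = {}"
    and cardP: "\<And>B. B \<in> P \<Longrightarrow> m \<le> card B"
    using cp by (auto simp: clique_partition_def)
  have smP: "sm x u v \<longleftrightarrow> (\<exists>B\<in>P. u \<in> B \<and> v \<in> B)" if "u \<in> {1..n}" "v \<in> {1..n}" for u v
  proof (cases "u = v")
    case True
    then show ?thesis using that UP by (auto simp: sm_refl)
  next
    case False
    have "x (pr u v) \<longleftrightarrow> E (min u v) (max u v)"
      using pr_pairs[OF that False] by (simp add: xE adj_vec_def pr_def)
    also have "\<dots> \<longleftrightarrow> (\<exists>B\<in>P. u \<in> B \<and> v \<in> B)"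
      using E that False by (cases "u < v") (auto simp: min_def max_def)
    finally show ?thesis using False by (simp add: sm_def)
  qed
  have 1: "\<forall>k. x k \<longrightarrow> k \<in> pairs n"
  proof (intro allI impI)
    fix k assume "x k" then show "k \<in> pairs n" by (cases k) (simp add: xE adj_vec_def)
  qed
  have 2: "\<forall>u\<in>{1..n}. \<forall>v\<in>{1..n}. \<forall>w\<in>{1..n}. sm x u v \<longrightarrow> sm x v w \<longrightarrow> sm x u w"
  proof (intro ballI impI)
    fix u v w assume uvw: "u \<in> {1..n}" "v \<in> {1..n}" "w \<in> {1..n}" and "sm x u v" "sm x v w"
    obtain A where "A \<in> P" "u \<in> A" "v \<in> A" using smP uvw \<open>sm x u v\<close> by blast
    obtain B where "B \<in> P" "v \<in> B" "w \<in> B" using smP uvw \<open>sm x v w\<close> by blast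
    have "A = B" using disj \<open>A \<in> P\<close> \<open>B \<in> P\<close> \<open>v \<in> A\<close> \<open>v \<in> B\<close> by blast
    then show "sm x u w" using smP uvw \<open>A \<in> P\<close> \<open>u \<in> A\<close> \<open>w \<in> B\<close> by blast
  qed
  have 3: "\<forall>u\<in>{1..n}. m \<le> card (cl n x u)"
  proof
    fix u assume u: "u \<in> {1..n}"
    then obtain B where B: "B \<in> P" "u \<in> B" using UP by blast
    have "cl n x u = B"
    proof
      show "cl n x u \<subseteq> B"
      proof
        fix v assume "v \<in> cl n x u"
        then obtain B' where "B' \<in> P" "u \<in> B'" "v \<in> B'" using smP u by (auto simp: cl_def)
        then have "B' = B" using disj B by blast
        then show "v \<in> B" using \<open>v \<in> B'\<close> by simp
      qed
      show "B \<subseteq> cl n x u"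
      proof
        fix v assume v: "v \<in> B"
        then have "v \<in> {1..n}" using UP B by blast
        then show "v \<in> cl n x u" using smP[OF u] B v by (auto simp: cl_def)
      qed
    qed
    then show "m \<le> card (cl n x u)" using cardP B by simp
  qed
  show ?thesis unfolding good_def by (intro conjI 1 2 3)
qed


lemma sm_tr: "good n m x \<Longrightarrow> u \<in> {1..n} \<Longrightarrow> v \<in> {1..n} \<Longrightarrow> w \<in> {1..n} \<Longrightarrow>
   sm x v u \<Longrightarrow> sm x v w \<Longrightarrow> sm x u w"
  using good_trans sm_sym by metis

lemma L0:
  assumes gx: "good n m x" and gy: "good n m y" and ne: "x \<noteq> y" and T0: "Tset n y x = {}"
  shows "m * m \<le> card (Tset n x y)"
proof -
  have "\<exists>k. x k \<noteq> y k" using ne by (simp add: fun_eq_iff)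
  then obtain k where k: "x k \<noteq> y k" by blast
  have kp: "k \<in> pairs n" using k good_out[OF gx, of k] good_out[OF gy, of k] by blast
  have "k \<notin> Tset n y x" using T0 by simp
  then have xk: "x k" "\<not> y k" using k kp unfolding Tset_def by blast+
  obtain i j where kij: "k = (i,j)" by fastforce
  have ij: "i < j" "1 \<le> i" "j \<le> n" using kp kij by (auto simp: pairs_def)
  have prk: "pr i j = k" using kij ij by (simp add: pr_def)
  have iV: "i \<in> {1..n}" and jV: "j \<in> {1..n}" using ij by auto
  have sxij: "sm x i j" using xk prk by (simp add: sm_def)
  have nsyij: "\<not> sm y i j" using xk prk ij by (simp add: sm_def)
  have sub: "sm x u v" if "u \<in> {1..n}" "v \<in> {1..n}" "sm y u v" for u v
  proof (rule ccontr)
    assume "\<not> sm x u v"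
    then have "u \<noteq> v" by (auto simp: sm_refl)
    then have "pr u v \<in> Tset n y x" using pr_in_T that \<open>\<not> sm x u v\<close> by blast
    then show False using T0 by simp
  qed
  define A where "A = cl n y i"
  define B where "B = cl n y j"
  have disjAB: "A \<inter> B = {}"
  proof (rule ccontr)
    assume "A \<inter> B \<noteq> {}"
    then obtain w where w: "w \<in> A" "w \<in> B" by blast
    then have "w \<in> {1..n}" "sm y i w" "sm y j w" by (auto simp: A_def B_def cl_def)
    then have "sm y i j" using sm_tr[OF gy] iV jV good_trans[OF gy] sm_sym by metis
    then show False using nsyij by simp
  qed
  have mapsto0: "pr a b \<in> Tset n x y" if a: "a \<in> A" and b: "b \<in> B" for a b
  proof -
    have aV: "a \<in> {1..n}" and bV: "b \<in> {1..n}" and sya: "sm y i a" and syb: "sm y j b"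
      using a b by (auto simp: A_def B_def cl_def)
    have ab: "a \<noteq> b" using a b disjAB by blast
    have "sm x i a" "sm x j b" using sub iV jV aV bV sya syb by auto
    then have "sm x a b" using sxij sm_tr[OF gx] iV jV aV bV by meson
    moreover have "\<not> sm y a b"
    proof
      assume "sm y a b"
      then have "sm y i b" using good_trans[OF gy] iV aV bV sya by blast
      then have "sm y i j" using sm_tr[OF gy] iV jV bV syb sm_sym by metis
      then show False using nsyij by simp
    qed
    ultimately show "pr a b \<in> Tset n x y" using pr_in_T aV bV ab by blast
  qed
  have mapsto: "(\<lambda>(a,b). pr a b) ` (A \<times> B) \<subseteq> Tset n x y" using mapsto0 by auto
  have inj: "inj_on (\<lambda>(a,b). pr a b) (A \<times> B)"
  proof (rule inj_onI, clarify)
    fix a b a' b' assume "a \<in> A" "b \<in> B" "a' \<in> A" "b' \<in> B" "pr a b = pr a' b'"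
    then show "a = a' \<and> b = b'" using pr_eq disjAB by blast
  qed
  have "m * m \<le> card A * card B"
    using good_card[OF gy iV] good_card[OF gy jV] by (simp add: A_def B_def mult_le_mono)
  also have "\<dots> = card (A \<times> B)" by (simp add: card_cartesian_product)
  also have "\<dots> = card ((\<lambda>(a,b). pr a b) ` (A \<times> B))" using card_image[OF inj] by simp
  also have "\<dots> \<le> card (Tset n x y)" using card_mono[OF finite_T mapsto] .
  finally show ?thesis .
qed


lemma K_img:
  assumes gx: "good n m x" and gy: "good n m y" and iV: "i \<in> {1..n}" and jV: "j \<in> {1..n}"
    and ij: "i \<noteq> j" and syij: "sm y i j" and nsxij: "\<not> sm x i j"
  shows "card (cl n y i) \<le> card (Tset n y x) + 1"
    and "card (Tset n y x) < card (cl n y i) \<Longrightarrow> k \<in> Tset n y x \<Longrightarrow> \<exists>z. k = pr i z \<or> k = pr j z"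
proof -
  define B where "B = cl n y i"
  define g where "g z = (if sm x i z then pr j z else pr i z)" for z
  have mem: "g z \<in> Tset n y x" if z: "z \<in> B - {i}" for z
  proof -
    have zV: "z \<in> {1..n}" and syz: "sm y i z" and zi: "z \<noteq> i" using z by (auto simp: B_def cl_def)
    show ?thesis
    proof (cases "sm x i z")
      case True
      have "j \<noteq> z" using True nsxij by auto
      moreover have "sm y j z" using sm_tr[OF gy jV iV zV] syij syz by blast
      moreover have "\<not> sm x j z"
      proof
        assume "sm x j z"
        then have "sm x i j" using good_trans[OF gx iV zV jV] True sm_sym by metis
        then show False using nsxij by simp
      qed
      ultimately show ?thesis using True pr_in_T[OF jV zV] by (simp add: g_def)
    next
      case False
      then show ?thesis using pr_in_T[OF iV zV] zi syz by (simp add: g_def)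
    qed
  qed
  have inj: "inj_on g (B - {i})"
  proof (rule inj_onI)
    fix z z' assume z: "z \<in> B - {i}" and z': "z' \<in> B - {i}" and e: "g z = g z'"
    show "z = z'"
    proof (cases "sm x i z"; cases "sm x i z'")
      assume "sm x i z" "sm x i z'"
      then show ?thesis using e pr_eq by (auto simp: g_def)
    next
      assume "\<not> sm x i z" "\<not> sm x i z'"
      then show ?thesis using e pr_eq by (auto simp: g_def)
    next
      assume a: "sm x i z" "\<not> sm x i z'"
      then have "pr j z = pr i z'" using e by (simp add: g_def)
      then show ?thesis using pr_eq ij z by blast
    next
      assume a: "\<not> sm x i z" "sm x i z'"
      then have "pr i z = pr j z'" using e by (simp add: g_def)
      then show ?thesis using pr_eq ij z' by blast
    qed
  qed
  have sub: "g ` (B - {i}) \<subseteq> Tset n y x" using mem by blast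
  have iB: "i \<in> B" using cl_self[OF iV] by (simp add: B_def)
  have cI: "card (g ` (B - {i})) = card B - 1"
    using card_image[OF inj] iB finite_cl by (simp add: B_def)
  have le: "card B - 1 \<le> card (Tset n y x)" using card_mono[OF finite_T sub] cI by simp
  show "card (cl n y i) \<le> card (Tset n y x) + 1" using le by (simp add: B_def)
  assume lt: "card (Tset n y x) < card (cl n y i)" and k: "k \<in> Tset n y x"
  have "card (Tset n y x) \<le> card (g ` (B - {i}))" using lt cI by (simp add: B_def)
  then have "g ` (B - {i}) = Tset n y x" using card_seteq[OF finite_T sub] by blast
  then obtain z where "k = g z" using k by blast
  then show "\<exists>z. k = pr i z \<or> k = pr j z" by (auto simp: g_def)
qed

lemma pr_has: "pr u v = pr a z \<Longrightarrow> u = a \<or> v = a" using pr_eq by blast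

lemma K2core:
  assumes gx: "good n m x" and gy: "good n m y" and aV: "a \<in> {1..n}" and bV: "b \<in> {1..n}"
    and ab: "a \<noteq> b" and syab: "sm y a b" and nsxab: "\<not> sm x a b"
    and cB: "card (cl n y a) \<le> m"
    and allT: "\<And>k. k \<in> Tset n y x \<Longrightarrow> \<exists>z. k = pr a z \<or> k = pr b z"
    and isol: "cl n x a \<inter> cl n y a = {a}"
  shows "2 * m \<le> card (Tset n x y) + 1"
proof (cases "m = 0")
  case True then show ?thesis by simp
next
  case m0: False
  define S1 where "S1 = (\<lambda>z. pr a z) ` (cl n x a - {a})"
  define S2 where "S2 = (\<lambda>z. pr b z) ` (cl n x b - cl n y b)"
  have S1sub: "S1 \<subseteq> Tset n x y"
  proof
    fix k assume "k \<in> S1"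
    then obtain z where z: "z \<in> cl n x a" "z \<noteq> a" and kz: "k = pr a z" by (auto simp: S1_def)
    have "z \<notin> cl n y a" using isol z by blast
    then have "\<not> sm y a z" using z by (auto simp: cl_def)
    moreover have "sm x a z" "z \<in> {1..n}" using z by (auto simp: cl_def)
    ultimately show "k \<in> Tset n x y" using pr_in_T[OF aV] z kz by metis
  qed
  have S2sub: "S2 \<subseteq> Tset n x y"
  proof
    fix k assume "k \<in> S2"
    then obtain z where z: "z \<in> cl n x b" "z \<notin> cl n y b" and kz: "k = pr b z" by (auto simp: S2_def)
    have "z \<noteq> b" using z cl_self[OF bV] by blast
    moreover have "\<not> sm y b z" "sm x b z" "z \<in> {1..n}" using z by (auto simp: cl_def)
    ultimately show "k \<in> Tset n x y" using pr_in_T[OF bV] kz by metis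
  qed
  have disj: "S1 \<inter> S2 = {}"
  proof (rule ccontr)
    assume "S1 \<inter> S2 \<noteq> {}"
    then obtain k where "k \<in> S1" "k \<in> S2" by blast
    then obtain z z' where z: "z \<in> cl n x a - {a}" and z': "z' \<in> cl n x b - cl n y b"
      and e: "pr a z = pr b z'" unfolding S1_def S2_def by blast
    then have "z' = a" using pr_eq ab by blast
    then have "sm x b a" using z' by (auto simp: cl_def)
    then show False using nsxab sm_sym by metis
  qed
  have inj1: "inj_on (\<lambda>z. pr a z) A" for A using pr_eq by (auto intro!: inj_onI)
  have inj2: "inj_on (\<lambda>z. pr b z) A" for A using pr_eq by (auto intro!: inj_onI)
  have c1: "card S1 = card (cl n x a) - 1"
    unfolding S1_def using card_image[OF inj1] cl_self[OF aV] finite_cl by simp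
  have c1m: "m \<le> card S1 + 1" using c1 good_card[OF gx aV] by simp
  have cyb: "cl n y b \<subseteq> cl n y a"
    using good_trans[OF gy aV bV] syab by (auto simp: cl_def)
  have "a \<in> cl n y b" using syab sm_sym aV by (auto simp: cl_def)
  have "a \<notin> cl n x b" using nsxab sm_sym by (auto simp: cl_def)
  have ne: "cl n x b - cl n y b \<noteq> {}"
  proof
    assume "cl n x b - cl n y b = {}"
    then have "cl n x b \<subseteq> cl n y b - {a}" using \<open>a \<notin> cl n x b\<close> by blast
    then have "card (cl n x b) \<le> card (cl n y b - {a})" by (rule card_mono[OF finite_Diff[OF finite_cl]])
    also have "\<dots> = card (cl n y b) - 1" using \<open>a \<in> cl n y b\<close> finite_cl by simp
    also have "\<dots> \<le> m - 1" using card_mono[OF finite_cl cyb] cB by simp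
    finally show False using good_card[OF gx bV] m0 by simp
  qed
  then obtain z0 where z0: "z0 \<in> cl n x b" "z0 \<notin> cl n y b" by blast
  have z0V: "z0 \<in> {1..n}" and sxz0: "sm x b z0" using z0 by (auto simp: cl_def)
  have "cl n y z0 \<subseteq> cl n x b - cl n y b"
  proof
    fix w assume w: "w \<in> cl n y z0"
    have wV: "w \<in> {1..n}" and syw: "sm y z0 w" using w by (auto simp: cl_def)
    have wn: "w \<notin> cl n y b"
    proof
      assume "w \<in> cl n y b"
      then have "sm y b w" by (auto simp: cl_def)
      then have "sm y b z0" using good_trans[OF gy bV wV z0V] syw sm_sym by metis
      then show False using z0 z0V by (auto simp: cl_def)
    qed
    have "sm x z0 w"
    proof (rule ccontr)
      assume ns: "\<not> sm x z0 w"
      then have "z0 \<noteq> w" using sm_refl by metis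
      then have "pr z0 w \<in> Tset n y x" using pr_in_T[OF z0V wV] syw ns by blast
      then obtain z where "pr z0 w = pr a z \<or> pr z0 w = pr b z" using allT by blast
      then have "z0 \<in> {a,b} \<or> w \<in> {a,b}" using pr_has by blast
      moreover have "b \<in> cl n y b" using cl_self[OF bV] .
      ultimately show False using \<open>a \<in> cl n y b\<close> wn z0 by blast
    qed
    then have "sm x b w" using good_trans[OF gx bV z0V wV] sxz0 by blast
    then show "w \<in> cl n x b - cl n y b" using wV wn by (auto simp: cl_def)
  qed
  then have "card (cl n y z0) \<le> card (cl n x b - cl n y b)"
    using card_mono finite_cl by (metis finite_Diff)
  then have c2m: "m \<le> card S2" using good_card[OF gy z0V] card_image[OF inj2] by (simp add: S2_def)
  have "card (S1 \<union> S2) = card S1 + card S2"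
    using card_Un_disjoint disj finite_subset[OF S1sub finite_T] finite_subset[OF S2sub finite_T] by blast
  moreover have "card (S1 \<union> S2) \<le> card (Tset n x y)" using card_mono[OF finite_T] S1sub S2sub by simp
  ultimately show ?thesis using c1m c2m by simp
qed


lemma K1:
  assumes gx: "good n m x" and gy: "good n m y" and ne: "Tset n y x \<noteq> {}"
  shows "m \<le> card (Tset n y x) + 1"
proof -
  obtain k where "k \<in> Tset n y x" using ne by blast
  then obtain i j where "i \<in> {1..n}" "j \<in> {1..n}" "i \<noteq> j" "sm y i j" "\<not> sm x i j"
    using T_elem by blast
  then show ?thesis using K_img(1)[OF gx gy] good_card[OF gy] by (meson le_trans)
qed

lemma K2:
  assumes gx: "good n m x" and gy: "good n m y" and ne: "Tset n y x \<noteq> {}"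
    and lt: "card (Tset n y x) < m"
  shows "2 * m \<le> card (Tset n x y) + 1"
proof -
  obtain k where "k \<in> Tset n y x" using ne by blast
  then obtain i j where iV: "i \<in> {1..n}" and jV: "j \<in> {1..n}" and ij: "i \<noteq> j"
    and syij: "sm y i j" and nsxij: "\<not> sm x i j"
    using T_elem by blast
  have cB: "card (cl n y i) \<le> m" using K_img(1)[OF gx gy iV jV ij syij nsxij] lt by simp
  have lt2: "card (Tset n y x) < card (cl n y i)" using lt good_card[OF gy iV] by simp
  have allT: "\<And>k. k \<in> Tset n y x \<Longrightarrow> \<exists>z. k = pr i z \<or> k = pr j z"
    using K_img(2)[OF gx gy iV jV ij syij nsxij lt2] by blast
  have cyj: "cl n y j \<subseteq> cl n y i"
    using good_trans[OF gy iV jV] syij by (auto simp: cl_def)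
  have cBj: "card (cl n y j) \<le> m" using card_mono[OF finite_cl cyj] cB by simp
  show ?thesis
  proof (cases "cl n x i \<inter> cl n y i = {i}")
    case True
    then show ?thesis using K2core[OF gx gy iV jV ij syij nsxij cB allT] by blast
  next
    case False
    have "i \<in> cl n x i \<inter> cl n y i" using cl_self[OF iV] by blast
    then obtain z where z: "z \<in> cl n x i" "z \<in> cl n y i" "z \<noteq> i" using False by blast
    have zV: "z \<in> {1..n}" and sxz: "sm x i z" and syz: "sm y i z" using z by (auto simp: cl_def)
    have isol: "cl n x j \<inter> cl n y j = {j}"
    proof (rule ccontr)
      assume "cl n x j \<inter> cl n y j \<noteq> {j}"
      moreover have "j \<in> cl n x j \<inter> cl n y j" using cl_self[OF jV] by blast
      ultimately obtain z' where z': "z' \<in> cl n x j" "z' \<in> cl n y j" "z' \<noteq> j" by blast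
      have z'V: "z' \<in> {1..n}" and sxz': "sm x j z'" and syz': "sm y j z'" using z' by (auto simp: cl_def)
      have zj: "z \<noteq> j" using sxz nsxij by blast
      have z'i: "z' \<noteq> i" using sxz' nsxij sm_sym by metis
      have nx: "\<not> sm x z z'"
      proof
        assume "sm x z z'"
        then have "sm x i z'" using good_trans[OF gx iV zV z'V] sxz by blast
        then have "sm x i j" using good_trans[OF gx iV z'V jV] sxz' sm_sym by metis
        then show False using nsxij by simp
      qed
      have "z \<noteq> z'" using nx sm_refl by metis
      moreover have "sm y z z'"
      proof -
        have "sm y i z'" using good_trans[OF gy iV jV z'V] syij syz' by blast
        moreover have "sm y z i" using syz sm_sym by metis
        ultimately show ?thesis using good_trans[OF gy zV iV z'V] by blast
      qed
      ultimately have "pr z z' \<in> Tset n y x" using pr_in_T[OF zV z'V] nx by blast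
      then obtain w where "pr z z' = pr i w \<or> pr z z' = pr j w" using allT by blast
      then have "z \<in> {i,j} \<or> z' \<in> {i,j}" using pr_has by blast
      then show False using z zj z' z'i by blast
    qed
    have syji: "sm y j i" using syij sm_sym by metis
    have nsxji: "\<not> sm x j i" using nsxij sm_sym by metis
    have allT': "\<And>k. k \<in> Tset n y x \<Longrightarrow> \<exists>z. k = pr j z \<or> k = pr i z" using allT by blast
    show ?thesis using K2core[OF gx gy jV iV _ syji nsxji cBj allT' isol] ij by blast
  qed
qed

lemma gamma_ge1:
  assumes "0 < p" "p \<le> q" "p + q < 1"
  shows "1 \<le> gamma_pq p q"
proof -
  define a where "a = p / (1 - q)"
  define b where "b = q / (1 - p)"
  have q1: "0 < 1 - q" "0 < 1 - p" using assms by auto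
  have a0: "0 < a" using assms q1 by (simp add: a_def)
  have b1: "b < 1" using assms q1 by (simp add: b_def field_simps)
  have b0: "0 < b" using assms q1 by (simp add: b_def)
  have "p * (1 - p) \<le> q * (1 - q)"
  proof -
    have "q * (1 - q) - p * (1 - p) = (q - p) * (1 - p - q)" by (simp add: algebra_simps)
    also have "\<dots> \<ge> 0" using assms by simp
    finally show ?thesis by simp
  qed
  then have ab: "a \<le> b" using q1 by (simp add: a_def b_def field_simps)
  have lb: "ln b < 0" using b0 b1 by simp
  have la: "ln a \<le> ln b" using a0 ab by simp
  have "gamma_pq p q = ln a / ln b" by (simp add: gamma_pq_def log_def a_def b_def)
  also have "\<dots> \<ge> 1" using la lb by (simp add: le_divide_eq)
  finally show ?thesis .
qed

lemma arith_iv: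
  fixes g t u M :: real
  assumes "1 \<le> g" "1 \<le> M" "M \<le> t + 1" "2 * M \<le> u + 1" "0 \<le> t"
  shows "min (M^2) ((1 + g) * M) \<le> g * t + u"
proof (cases "g \<ge> M - 1")
  case True
  have "(M - 1) * (M - 1) \<le> g * t" using True assms by (intro mult_mono) auto
  then have "M^2 \<le> g * t + u" using assms by (simp add: power2_eq_square algebra_simps)
  then show ?thesis by simp
next
  case False
  have "g * (M - 1) \<le> g * t" using assms by (intro mult_left_mono) auto
  moreover have "(1 + g) * M \<le> g * (M - 1) + 2 * M - 1" using False by (simp add: algebra_simps)
  ultimately have "(1 + g) * M \<le> g * t + u" using assms by linarith
  then show ?thesis by (simp add: min_le_iff_disj)
qed

lemma arith_v:
  fixes g t u M :: real
  assumes "1 \<le> g" "2 \<le> M" "M \<le> u + 1" "2 * M \<le> t + 1"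
  shows "min (M^2) ((1 + g) * M) \<le> g * t + u"
proof -
  have h1: "g * (2 * M - 1) \<le> g * t" using assms by (intro mult_left_mono) auto
  have h2: "g * 1 \<le> g * (M - 1)" using assms by (intro mult_left_mono) auto
  have e1: "g * (2 * M - 1) = 2 * (g * M) - g" and e2: "g * (M - 1) = g * M - g"
    and e3: "(1 + g) * M = M + g * M" by (simp_all add: algebra_simps)
  have "(1 + g) * M \<le> g * t + u" using h1 h2 assms unfolding e1 e2 e3 by linarith
  then show ?thesis by (simp add: min_le_iff_disj)
qed

lemma arith_iii:
  fixes g t u M :: real
  assumes "1 \<le> g" "M \<le> u" "M \<le> t"
  shows "min (M^2) ((1 + g) * M) \<le> g * t + u"
proof -
  have h: "g * M \<le> g * t" using assms by (intro mult_left_mono) auto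
  have e3: "(1 + g) * M = M + g * M" by (simp add: algebra_simps)
  have "(1 + g) * M \<le> g * t + u" using h assms unfolding e3 by linarith
  then show ?thesis by (simp add: min_le_iff_disj)
qed


lemma dd_T1: "dd n True False y x = card (Tset n y x)" by (simp add: dd_def Tset_def)
lemma dd_T2: "dd n False True y x = card (Tset n x y)"
  unfolding dd_def Tset_def by (rule arg_cong[where f=card]) auto

lemma two_codewords:
  assumes "m \<ge> 1" "n \<ge> 2 * m"
  shows "\<exists>x y. x \<in> community_code n m \<and> y \<in> community_code n m \<and> x \<noteq> y"
proof -
  define E1 where "E1 = (\<lambda>i j::nat. i \<noteq> j)"
  define E2 where "E2 = (\<lambda>i j::nat. i \<noteq> j \<and> (i \<le> m \<longleftrightarrow> j \<le> m))"
  have c1: "cluster_graph n m E1"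
    unfolding cluster_graph_def
  proof (intro exI[of _ "{{1..n}}"] conjI)
    show "clique_partition {1..n} m {{1..n}}" using assms by (auto simp: clique_partition_def)
    show "\<forall>i\<in>{1..n}. \<forall>j\<in>{1..n}. E1 i j = (i \<noteq> j \<and> (\<exists>B\<in>{{1..n}}. i \<in> B \<and> j \<in> B))"
      by (auto simp: E1_def)
  qed
  have c2: "cluster_graph n m E2"
    unfolding cluster_graph_def
  proof (intro exI[of _ "{{1..m},{m+1..n}}"] conjI)
    have "{1..m} \<noteq> {m+1..n}" using assms by auto
    moreover have "{1..m} \<inter> {m+1..n} = {}" by auto
    moreover have "\<Union>{{1..m},{m+1..n}} = {1..n}" using assms by auto
    moreover have "{} \<notin> {{1..m},{m+1..n}}" using assms by auto
    moreover have "m \<le> card {m+1..n}" using assms by simp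
    ultimately show "clique_partition {1..n} m {{1..m},{m+1..n}}"
      by (auto simp: clique_partition_def)
    show "\<forall>i\<in>{1..n}. \<forall>j\<in>{1..n}. E2 i j = (i \<noteq> j \<and> (\<exists>B\<in>{{1..m},{m+1..n}}. i \<in> B \<and> j \<in> B))"
    proof (intro ballI)
      fix i j assume i: "i \<in> {1..n}" and j: "j \<in> {1..n}"
      have "(\<exists>B\<in>{{1..m},{m+1..n}}. i \<in> B \<and> j \<in> B) \<longleftrightarrow>
            (i \<in> {1..m} \<and> j \<in> {1..m}) \<or> (i \<in> {m+1..n} \<and> j \<in> {m+1..n})" by blast
      also have "\<dots> \<longleftrightarrow> (i \<le> m \<longleftrightarrow> j \<le> m)" using i j by auto
      finally show "E2 i j = (i \<noteq> j \<and> (\<exists>B\<in>{{1..m},{m+1..n}}. i \<in> B \<and> j \<in> B))"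
        by (simp add: E2_def)
    qed
  qed
  have "adj_vec n E1 (1, n) \<noteq> adj_vec n E2 (1, n)"
    using assms by (auto simp: adj_vec_def E1_def E2_def pairs_def)
  moreover have "adj_vec n E1 \<in> community_code n m" using c1 unfolding community_code_def by blast
  moreover have "adj_vec n E2 \<in> community_code n m" using c2 unfolding community_code_def by blast
  ultimately show ?thesis by metis
qed

lemma pair_bound:
  assumes gx: "good n m x" and gy: "good n m y" and ne: "x \<noteq> y" and m1: "m \<ge> 1" and g1: "1 \<le> g"
  shows "min (real (m^2)) ((1 + g) * real m)
           \<le> g * real (card (Tset n y x)) + real (card (Tset n x y))"
proof -
  define t where "t = card (Tset n y x)"
  define u where "u = card (Tset n x y)"
  have rm: "real (m^2) = (real m)^2" by simp
  show ?thesis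
  proof (cases "Tset n y x = {}")
    case True
    have "m * m \<le> u" using L0[OF gx gy ne True] by (simp add: u_def)
    then have "real (m * m) \<le> real u" by (simp only: of_nat_le_iff)
    moreover have "(real m)^2 = real (m * m)" by (simp add: power2_eq_square)
    moreover have "0 \<le> g * real t" using g1 by simp
    ultimately have A: "(real m)^2 \<le> g * real t + real u" by linarith
    show ?thesis unfolding t_def[symmetric] u_def[symmetric] rm min_le_iff_disj using A by (rule disjI1)
  next
    case Tne: False
    show ?thesis
    proof (cases "Tset n x y = {}")
      case True
      have "m * m \<le> t" using L0[OF gy gx ne[symmetric] True] by (simp add: t_def)
      then have "real (m * m) \<le> real t" by (simp only: of_nat_le_iff)
      moreover have "(real m)^2 = real (m * m)" by (simp add: power2_eq_square)
      moreover have "real t \<le> g * real t" using mult_right_mono[OF g1, of "real t"] by simp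
      moreover have "0 \<le> real u" by simp
      ultimately have A: "(real m)^2 \<le> g * real t + real u" by linarith
      show ?thesis unfolding t_def[symmetric] u_def[symmetric] rm min_le_iff_disj using A by (rule disjI1)
    next
      case Une: False
      have k1: "m \<le> t + 1" using K1[OF gx gy Tne] by (simp add: t_def)
      have k1': "m \<le> u + 1" using K1[OF gy gx Une] by (simp add: u_def)
      have t1: "1 \<le> t" using Tne finite_T by (simp add: t_def Suc_le_eq card_gt_0_iff)
      have u1: "1 \<le> u" using Une finite_T by (simp add: u_def Suc_le_eq card_gt_0_iff)
      show ?thesis unfolding t_def[symmetric] u_def[symmetric] rm
      proof (cases "t < m")
        case True
        have "2 * m \<le> u + 1" using K2[OF gx gy Tne] True by (simp add: t_def u_def)
        then show "min ((real m)\<^sup>2) ((1 + g) * real m) \<le> g * real t + real u"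
          using arith_iv[OF g1, of "real m" t u] m1 k1 by simp
      next
        case tm: False
        show "min ((real m)\<^sup>2) ((1 + g) * real m) \<le> g * real t + real u"
        proof (cases "u < m")
          case True
          have "2 * m \<le> t + 1" using K2[OF gy gx Une] True by (simp add: t_def u_def)
          moreover have "2 \<le> m" using True u1 by simp
          ultimately show ?thesis using arith_v[OF g1, of "real m" u t] k1' by simp
        next
          case False
          then show ?thesis using arith_iii[OF g1, of "real m" u t] tm by simp
        qed
      qed
    qed
  qed
qed

theorem theorem2:
  fixes m n :: nat and p q :: real
  assumes "m \<ge> 1" and "n \<ge> 2 * m"
    and "0 < p" and "p \<le> q" and "0 < p + q" and "p + q < 1"
  shows "min_discrepancy n p q (community_code n m)
           \<ge> min (real (m ^ 2)) ((1 + gamma_pq p q) * real m)"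
proof -
  let ?C = "community_code n m"
  let ?S = "{discrepancy n p q y x | x y. x \<in> ?C \<and> y \<in> ?C \<and> x \<noteq> y}"
  have g1: "1 \<le> gamma_pq p q" using gamma_ge1 assms by blast
  obtain x0 y0 where "x0 \<in> ?C" "y0 \<in> ?C" "x0 \<noteq> y0" using two_codewords assms(1,2) by blast
  then have ne: "?S \<noteq> {}" by blast
  have "min (real (m ^ 2)) ((1 + gamma_pq p q) * real m) \<le> Inf ?S"
  proof (rule cInf_greatest[OF ne])
    fix s assume "s \<in> ?S"
    then obtain x y where xy: "x \<in> ?C" "y \<in> ?C" "x \<noteq> y" and s: "s = discrepancy n p q y x" by blast
    show "min (real (m ^ 2)) ((1 + gamma_pq p q) * real m) \<le> s"
      using pair_bound[OF code_good[OF xy(1)] code_good[OF xy(2)] xy(3) assms(1) g1]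
      by (simp add: s discrepancy_def dd_T1 dd_T2)
  qed
  then show ?thesis by (simp add: min_discrepancy_def)
qed

end
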